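(* Let $x^A=x_1^{\alpha_1}\cdots x_N^{\alpha_N}$ with $\alpha_1,\dots,\alpha_N\ge 0$, $D=N+\alpha_1+\dots+\alpha_N$, and let $\mathbb{R}^N_*=\{x\in\mathbb{R}^N: x_i>0 \text{ whenever } \alpha_i>0\}$. For every $u\in S_A$ with $u\neq 0$, setting $$\lambda=\left(\frac{\int_{\mathbb{R}^N_*}|u|^2|x|^2x^A\,dx}{\int_{\mathbb{R}^N_*}|\nabla u|^2x^A\,dx}\right)^{1/4},$$ we have $$\left(\int_{\mathbb{R}^N_*}|\nabla u|^2x^A\,dx\right)^{1/2}\left(\int_{\mathbb{R}^N_*}|u|^2|x|^2x^A\,dx\right)^{1/2}-\frac{D}{2}\int_{\mathbb{R}^N_*}|u|^2x^A\,dx=\frac{\lambda^2}{2}\int_{\mathbb{R}^N_*}\left|\nabla\left(ue^{\frac{|x|^2}{2\lambda^2}}\right)\right|^2e^{-\frac{|x|^2}{\lambda^2}}x^A\,dx.$$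
   Context: $N_*$ denotes the set of $u\in C_0^\infty(\overline{\mathbb{R}^N_*})$ with $\nabla u\cdot\vec\eta=0$ on $\partial\mathbb{R}^N_*$, where $\vec\eta$ is the outer unit normal of $\mathbb{R}^N_*$. $S_A$ is the completion of $N_*$ under the norm $\left(\int_{\mathbb{R}^N_*}|\nabla u|^2x^A\,dx\right)^{1/2}+\left(\int_{\mathbb{R}^N_*}|u|^2|x|^2x^A\,dx\right)^{1/2}$. *)

theory Defs
  imports "HOL-Analysis.Analysis"
begin

text \<open>Weight x^A; factors with alpha_i = 0 are identically 1 (avoids Isabelle's 0 powr 0 = 0).\<close>
definition wA :: "real^'n \<Rightarrow> real^'n \<Rightarrow> real" where
  "wA \<alpha> x = (\<Prod>i\<in>UNIV. if \<alpha>$i = 0 then 1 else x$i powr (\<alpha>$i))"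

definition Rstar :: "real^'n \<Rightarrow> (real^'n) set" where
  "Rstar \<alpha> = {x. \<forall>i. \<alpha>$i > 0 \<longrightarrow> x$i > 0}"

definition dpart1 :: "'n \<Rightarrow> (real^'n \<Rightarrow> real) \<Rightarrow> real^'n \<Rightarrow> real" where
  "dpart1 i f x = deriv (\<lambda>t. f (x + t *\<^sub>R axis i 1)) 0"

fun dpart :: "'n list \<Rightarrow> (real^'n \<Rightarrow> real) \<Rightarrow> real^'n \<Rightarrow> real" where
  "dpart [] f = f"
| "dpart (i # is) f = dpart1 i (dpart is f)"

definition smooth :: "(real^'n \<Rightarrow> real) \<Rightarrow> bool" where
  "smooth f \<longleftrightarrow> (\<forall>is x. dpart is f differentiable (at x))"

definition grad :: "(real^'n \<Rightarrow> real) \<Rightarrow> real^'n \<Rightarrow> real^'n" where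
  "grad f x = (\<chi> i. dpart1 i f x)"

text \<open>The class N_*: smooth, compactly supported, with vanishing normal derivative on the
  boundary of R^N_* (the outer normal on the face x_i = 0 is -e_i).\<close>
definition Nstar :: "real^'n \<Rightarrow> (real^'n \<Rightarrow> real) set" where
  "Nstar \<alpha> = {\<phi>. smooth \<phi> \<and> compact (closure {x. \<phi> x \<noteq> 0}) \<and>
      (\<forall>i x. \<alpha>$i > 0 \<longrightarrow> x \<in> closure (Rstar \<alpha>) \<longrightarrow> x$i = 0 \<longrightarrow> dpart1 i \<phi> x = 0)}"

text \<open>S_A: completion of N_* under the given norm. An element is represented by a pair (u, g)
  of a function and its (weak) gradient, which are limits of some sequence in N_* in the
  weighted L^2 norms of the gradient and of |x| u respectively.\<close>
definition SA :: "real^'n \<Rightarrow> ((real^'n \<Rightarrow> real) \<times> (real^'n \<Rightarrow> real^'n)) set" where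
  "SA \<alpha> = {(u, g). u \<in> borel_measurable lborel \<and> g \<in> borel_measurable lborel \<and>
      (\<exists>\<phi>::nat \<Rightarrow> real^'n \<Rightarrow> real. (\<forall>k. \<phi> k \<in> Nstar \<alpha>) \<and>
         ((\<lambda>k. \<integral>\<^sup>+ x\<in>Rstar \<alpha>. ennreal ((norm (grad (\<phi> k) x - g x))\<^sup>2 * wA \<alpha> x) \<partial>lborel)
            \<longlonglongrightarrow> 0) \<and>
         ((\<lambda>k. \<integral>\<^sup>+ x\<in>Rstar \<alpha>. ennreal ((\<phi> k x - u x)\<^sup>2 * (norm x)\<^sup>2 * wA \<alpha> x) \<partial>lborel)
            \<longlonglongrightarrow> 0))}"

end

theory Submission
  imports Defs
begin


definition wt :: "real^'n \<Rightarrow> real^'n \<Rightarrow> real" where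
  "wt \<alpha> x = indicator (Rstar \<alpha>) x * wA \<alpha> x"

lemma Rstar_open: fixes \<alpha> :: "real^'n" shows "open (Rstar \<alpha>)"
proof -
  have "Rstar \<alpha> = (\<Inter>i\<in>{i. \<alpha>$i > 0}. {x. x$i > 0})"
    unfolding Rstar_def by auto
  moreover have "open (\<Inter>i\<in>{i. \<alpha>$i > 0}. {x::real^'n. x$i > 0})"
    by (intro open_INT) (auto simp: open_halfspace_component_gt_cart)
  ultimately show ?thesis by simp
qed

lemma Rstar_sets[measurable]: "Rstar \<alpha> \<in> sets borel"
  using Rstar_open by (rule borel_open)

lemma wA_meas[measurable]: "wA \<alpha> \<in> borel_measurable borel"
  unfolding wA_def by measurable

lemma wt_meas[measurable]: "wt \<alpha> \<in> borel_measurable borel"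
  unfolding wt_def by measurable

lemma wA_nonneg: "0 \<le> wA \<alpha> x"
  unfolding wA_def by (auto intro!: prod_nonneg)

lemma wt_nonneg: "0 \<le> wt \<alpha> x"
  unfolding wt_def using wA_nonneg[of \<alpha> x] by (intro mult_nonneg_nonneg) (auto simp: indicator_def)

lemma Rstar_scale: fixes \<alpha> :: "real^'n" shows "t > 0 \<Longrightarrow> (t *\<^sub>R x \<in> Rstar \<alpha>) = (x \<in> Rstar \<alpha>)"
  unfolding Rstar_def by (auto simp: zero_less_mult_iff)

lemma wt_scale:
  assumes "\<forall>i. \<alpha>$i \<ge> 0" "t > 0"
  shows "wt \<alpha> (t *\<^sub>R x) = t powr (\<Sum>i\<in>UNIV. \<alpha>$i) * wt \<alpha> x"
proof (cases "x \<in> Rstar \<alpha>")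
  case True
  have "wA \<alpha> (t *\<^sub>R x) = (\<Prod>i\<in>UNIV. t powr (\<alpha>$i) * (if \<alpha>$i = 0 then 1 else x$i powr (\<alpha>$i)))"
    unfolding wA_def
  proof (rule prod.cong[OF refl])
    fix i
    show "(if \<alpha>$i = 0 then 1 else (t *\<^sub>R x)$i powr (\<alpha>$i)) = t powr (\<alpha>$i) * (if \<alpha>$i = 0 then 1 else x$i powr (\<alpha>$i))"
    proof (cases "\<alpha>$i = 0")
      case False
      then have "\<alpha>$i > 0" using assms(1)[rule_format, of i] by linarith
      then have "x$i > 0" using True unfolding Rstar_def by blast
      then show ?thesis using False assms(2) by (simp add: powr_mult)
    qed (use assms(2) in simp)
  qed
  also have "\<dots> = t powr (\<Sum>i\<in>UNIV. \<alpha>$i) * wA \<alpha> x"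
    unfolding prod.distrib wA_def using assms(2) by (simp add: powr_sum)
  finally have "wA \<alpha> (t *\<^sub>R x) = t powr (\<Sum>i\<in>UNIV. \<alpha>$i) * wA \<alpha> x" .
  moreover have "t *\<^sub>R x \<in> Rstar \<alpha>" using True assms(2) unfolding Rstar_def by (auto simp: zero_less_mult_iff)
  ultimately show ?thesis unfolding wt_def using True by simp
next
  case False
  moreover have "t *\<^sub>R x \<notin> Rstar \<alpha>" using False assms(2) unfolding Rstar_def by (auto simp: zero_less_mult_iff)
  ultimately show ?thesis unfolding wt_def by simp
qed

lemma wt_bound:
  assumes "\<forall>i. \<alpha>$i \<ge> 0" "norm x \<le> R"
  shows "wt \<alpha> x \<le> (\<Prod>i\<in>UNIV. if \<alpha>$i = 0 then 1 else R powr (\<alpha>$i))"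
proof (cases "x \<in> Rstar \<alpha>")
  case True
  have "wA \<alpha> x \<le> (\<Prod>i\<in>UNIV. if \<alpha>$i = 0 then 1 else R powr (\<alpha>$i))"
    unfolding wA_def
  proof (rule prod_mono)
    fix i
    show "0 \<le> (if \<alpha>$i = 0 then 1 else x$i powr (\<alpha>$i)) \<and>
      (if \<alpha>$i = 0 then 1 else x$i powr (\<alpha>$i)) \<le> (if \<alpha>$i = 0 then 1 else R powr (\<alpha>$i))"
    proof (cases "\<alpha>$i = 0")
      case False
      then have "\<alpha>$i > 0" using assms(1)[rule_format, of i] by linarith
      then have "x$i > 0" using True unfolding Rstar_def by blast
      moreover have "x$i \<le> R" using component_le_norm_cart[of x i] assms(2) by auto
      ultimately show ?thesis using False assms(1) by (auto intro: powr_mono2)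
    qed simp
  qed
  then show ?thesis unfolding wt_def using True by simp
next
  case False
  then show ?thesis unfolding wt_def by (auto intro!: prod_nonneg)
qed

lemma int_wt:
  fixes F :: "real^'n \<Rightarrow> real"
  assumes "\<forall>i. \<alpha>$i \<ge> 0" "F \<in> borel_measurable borel" "\<And>x. \<bar>F x\<bar> \<le> B"
    "\<And>x. R \<le> norm x \<Longrightarrow> F x = 0"
  shows "integrable lborel (\<lambda>x. wt \<alpha> x * F x)"
proof -
  define K where "K = (\<Prod>i\<in>UNIV. if \<alpha>$i = 0 then 1 else R powr (\<alpha>$i))"
  show ?thesis
  proof (rule Bochner_Integration.integrable_bound[where f="\<lambda>x. (K * B) * indicator (ball 0 R) x"])
  show "integrable lborel (\<lambda>x::real^'n. (K * B) * indicator (ball 0 R) x)"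
    using emeasure_bounded_finite[of "ball (0::real^'n) R"]
    by (intro integrable_mult_right integrable_real_indicator) (auto simp: top.not_eq_extremum)
  show "(\<lambda>x. wt \<alpha> x * F x) \<in> borel_measurable lborel" using assms(2) by measurable
  show "AE x in lborel. norm (wt \<alpha> x * F x) \<le> norm (K * B * indicator (ball 0 R) x)"
  proof (rule AE_I2)
    fix x
    show "norm (wt \<alpha> x * F x) \<le> norm (K * B * indicator (ball 0 R) x)"
    proof (cases "norm x < R")
      case True
      have "wt \<alpha> x \<le> K" unfolding K_def using True assms(1) by (intro wt_bound) auto
      then have "wt \<alpha> x * \<bar>F x\<bar> \<le> K * B"
        using wt_nonneg[of \<alpha> x] assms(3)[of x] by (intro mult_mono) auto
      moreover have "0 \<le> K * B" using \<open>wt \<alpha> x \<le> K\<close> wt_nonneg[of \<alpha> x] assms(3)[of x] by auto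
      moreover have "norm (K * B * indicator (ball 0 R) x) = K * B" using True \<open>0 \<le> K * B\<close> by simp
      ultimately show ?thesis using True wt_nonneg[of \<alpha> x] by (simp add: abs_mult)
    next
      case False
      then show ?thesis using assms(4)[of x] by auto
    qed
  qed
qed
qed

lemma integral_scale:
  fixes F :: "real^'n \<Rightarrow> real"
  assumes t: "t \<noteq> 0" and [measurable]: "F \<in> borel_measurable borel"
  shows "integral\<^sup>L lborel F = \<bar>t\<bar>^CARD('n) * integral\<^sup>L lborel (\<lambda>x. F (t *\<^sub>R x))"
proof -
  have eq: "lborel = density (distr lborel borel (\<lambda>x::real^'n. 0 + t *\<^sub>R x)) (\<lambda>_. \<bar>t\<bar>^DIM(real^'n))"
    using lborel_affine[OF t, of "0::real^'n"] by (simp only:)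
  have "integral\<^sup>L lborel F = integral\<^sup>L (density (distr lborel borel (\<lambda>x::real^'n. 0 + t *\<^sub>R x)) (\<lambda>_. \<bar>t\<bar>^DIM(real^'n))) F"
    using arg_cong[OF eq, of "\<lambda>M. integral\<^sup>L M F"] .
  also have "\<dots> = integral\<^sup>L (distr lborel borel (\<lambda>x::real^'n. 0 + t *\<^sub>R x)) (\<lambda>x. \<bar>t\<bar>^DIM(real^'n) *\<^sub>R F x)"
    by (rule integral_density) auto
  also have "\<dots> = integral\<^sup>L lborel (\<lambda>x. \<bar>t\<bar>^DIM(real^'n) *\<^sub>R F (0 + t *\<^sub>R x))"
    by (rule integral_distr) auto
  finally show ?thesis by simp
qed



lemma scale_deriv:
  fixes \<psi> :: "real^'n \<Rightarrow> real" and G :: "real^'n \<Rightarrow> real^'n"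
  assumes der: "\<And>x. (\<psi> has_derivative (\<lambda>h. G x \<bullet> h)) (at x)"
  shows "((\<lambda>s. (\<psi> (s *\<^sub>R x))^2) has_real_derivative 2 * \<psi> (s *\<^sub>R x) * (G (s *\<^sub>R x) \<bullet> x)) (at s)"
proof -
  have "((\<lambda>s. s *\<^sub>R x) has_derivative (\<lambda>h. h *\<^sub>R x)) (at s)"
    by (auto intro!: derivative_eq_intros)
  from has_derivative_compose[OF this der]
  have "((\<lambda>s. \<psi> (s *\<^sub>R x)) has_derivative (\<lambda>h. G (s *\<^sub>R x) \<bullet> (h *\<^sub>R x))) (at s)" .
  moreover have "(\<lambda>h. G (s *\<^sub>R x) \<bullet> (h *\<^sub>R x)) = (*) (G (s *\<^sub>R x) \<bullet> x)"
    by (auto simp: fun_eq_iff)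
  ultimately have d1: "((\<lambda>s. \<psi> (s *\<^sub>R x)) has_real_derivative (G (s *\<^sub>R x) \<bullet> x)) (at s)"
    unfolding has_field_derivative_def by simp
  show ?thesis
    unfolding power2_eq_square
    by (rule DERIV_cong[OF DERIV_mult[OF d1 d1]]) simp
qed

lemma P_lemma:
  fixes \<psi> :: "real^'n \<Rightarrow> real" and G :: "real^'n \<Rightarrow> real^'n" and \<alpha> :: "real^'n"
  assumes \<alpha>: "\<forall>i. \<alpha>$i \<ge> 0"
    and der: "\<And>x. (\<psi> has_derivative (\<lambda>h. G x \<bullet> h)) (at x)"
    and cG: "continuous_on UNIV G"
    and supp: "\<And>x. R \<le> norm x \<Longrightarrow> \<psi> x = 0"
  shows "(real CARD('n) + (\<Sum>i\<in>UNIV. \<alpha>$i)) * (\<integral>x. wt \<alpha> x * (\<psi> x)^2 \<partial>lborel)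
       = -2 * (\<integral>x. wt \<alpha> x * (\<psi> x * (G x \<bullet> x)) \<partial>lborel)"
proof -
  define D where "D = real CARD('n) + (\<Sum>i\<in>UNIV. \<alpha>$i)"
  define S where "S = (\<Sum>i\<in>UNIV. \<alpha>$i)"
  define R0 where "R0 = max R 1"
  have R0: "R0 > 0" "\<And>x. R0 \<le> norm x \<Longrightarrow> \<psi> x = 0" using supp by (auto simp: R0_def)
  have c\<psi>: "continuous_on UNIV \<psi>" using der
    by (meson continuous_at_imp_continuous_on has_derivative_continuous)
  have [measurable]: "\<psi> \<in> borel_measurable borel" "G \<in> borel_measurable borel"
    by (auto intro: borel_measurable_continuous_onI c\<psi> cG)
  obtain B\<psi> where B\<psi>: "\<And>x. \<bar>\<psi> x\<bar> \<le> B\<psi>" "B\<psi> \<ge> 0"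
  proof -
    have "bounded (\<psi> ` cball 0 R0)"
      by (intro compact_imp_bounded compact_continuous_image continuous_on_subset[OF c\<psi>]) auto
    then obtain B where B: "\<forall>y\<in>\<psi> ` cball 0 R0. norm y \<le> B" by (auto simp: bounded_iff)
    have "\<bar>\<psi> x\<bar> \<le> max B 0" for x
    proof (cases "norm x \<le> R0")
      case True then show ?thesis using B by force
    next
      case False then show ?thesis using R0(2)[of x] by auto
    qed
    then show ?thesis using that[of "max B 0"] by auto
  qed
  obtain BG where BG: "\<And>x. norm x \<le> 2 * R0 \<Longrightarrow> norm (G x) \<le> BG" "BG \<ge> 0"
  proof -
    have "bounded (G ` cball 0 (2 * R0))"
      by (intro compact_imp_bounded compact_continuous_image continuous_on_subset[OF cG]) auto
    then obtain B where B: "\<forall>y\<in>G ` cball 0 (2 * R0). norm y \<le> B" by (auto simp: bounded_iff)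
    have "norm (G x) \<le> max B 0" if "norm x \<le> 2 * R0" for x
      using B that by force
    then show ?thesis using that[of "max B 0"] by auto
  qed
  have sqb: "(\<psi> y)^2 \<le> B\<psi>^2" for y
    using B\<psi>(1)[of y] by (metis abs_ge_zero power2_abs power_mono)
  define C where "C = (\<integral>x. wt \<alpha> x * (\<psi> x)^2 \<partial>lborel)"
  have intt: "integrable lborel (\<lambda>x. wt \<alpha> x * (\<psi> (t *\<^sub>R x))^2)" if t: "t \<ge> 1" for t
  proof (rule int_wt[OF \<alpha>, where B="B\<psi>^2" and R=R0])
    show "(\<lambda>x. (\<psi> (t *\<^sub>R x))\<^sup>2) \<in> borel_measurable borel" by measurable
    show "\<bar>(\<psi> (t *\<^sub>R x))\<^sup>2\<bar> \<le> B\<psi>\<^sup>2" for x using sqb by simp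
    show "(\<psi> (t *\<^sub>R x))\<^sup>2 = 0" if "R0 \<le> norm x" for x
    proof -
      have "norm x \<le> norm (t *\<^sub>R x)" using t by (simp add: mult_le_cancel_right1)
      then show ?thesis using R0(2) that by auto
    qed
  qed
  have int1: "integrable lborel (\<lambda>x. wt \<alpha> x * (\<psi> x)^2)"
    using intt[of 1] by simp
  have scal: "(\<integral>x. wt \<alpha> x * (\<psi> (t *\<^sub>R x))^2 \<partial>lborel) = C / t powr D" if t: "t > 0" for t
  proof -
    have "C = \<bar>t\<bar>^CARD('n) * (\<integral>x. wt \<alpha> (t *\<^sub>R x) * (\<psi> (t *\<^sub>R x))^2 \<partial>lborel)"
      unfolding C_def using t by (intro integral_scale) auto
    also have "\<dots> = t^CARD('n) * (\<integral>x. t powr S * (wt \<alpha> x * (\<psi> (t *\<^sub>R x))^2) \<partial>lborel)"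
      using t wt_scale[OF \<alpha> t] by (simp add: S_def mult.assoc)
    also have "\<dots> = (t^CARD('n) * t powr S) * (\<integral>x. wt \<alpha> x * (\<psi> (t *\<^sub>R x))^2 \<partial>lborel)"
      by simp
    also have "t^CARD('n) * t powr S = t powr D"
      unfolding D_def S_def using t by (simp add: powr_add powr_realpow)
    finally show ?thesis using t by simp
  qed
  define h where "h n = inverse (real (Suc n))" for n
  have h: "h n > 0" "h n \<le> 1" for n unfolding h_def by (auto simp: field_simps)
  define Q where "Q n x = wt \<alpha> x * (((\<psi> ((1 + h n) *\<^sub>R x))^2 - (\<psi> x)^2) / h n)" for n x
  have intQ: "(\<integral>x. Q n x \<partial>lborel) = ((1 + h n) powr (-D) - 1) / h n * C" for n
  proof -
    have "(\<integral>x. Q n x \<partial>lborel) = (\<integral>x. (wt \<alpha> x * (\<psi> ((1 + h n) *\<^sub>R x))^2 - wt \<alpha> x * (\<psi> x)^2) / h n \<partial>lborel)"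
      unfolding Q_def by (simp add: right_diff_distrib)
    also have "\<dots> = ((\<integral>x. wt \<alpha> x * (\<psi> ((1 + h n) *\<^sub>R x))^2 \<partial>lborel) - C) / h n"
      unfolding C_def integral_divide_zero
      using intt[of "1 + h n"] int1 h[of n] by (subst Bochner_Integration.integral_diff) auto
    also have "\<dots> = (C / (1 + h n) powr D - C) / h n"
      using h[of n] scal[of "1 + h n"] by simp
    also have "\<dots> = ((1 + h n) powr (-D) - 1) / h n * C"
      by (simp add: powr_minus_divide field_simps)
    finally show ?thesis .
  qed
  have hlim: "filterlim (\<lambda>n. 1 + h n) (at 1) sequentially"
  proof (rule filterlim_atI)
    show "(\<lambda>n. 1 + h n) \<longlonglongrightarrow> 1"
      unfolding h_def using tendsto_add[OF tendsto_const LIMSEQ_inverse_real_of_nat, of 1] by simp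
    have "1 + h n \<noteq> 1" for n using h(1)[of n] by simp
    then show "\<forall>\<^sub>F n in sequentially. 1 + h n \<noteq> 1" by (intro always_eventually) auto
  qed
  have lim1: "(\<lambda>n. \<integral>x. Q n x \<partial>lborel) \<longlonglongrightarrow> -D * C"
  proof -
    have "((\<lambda>s. s powr (-D)) has_real_derivative (-D) * 1 powr (-D - 1)) (at 1)"
      by (rule has_real_derivative_powr) simp
    then have "((\<lambda>y. (y powr (-D) - 1 powr (-D)) / (y - 1)) \<longlongrightarrow> -D) (at 1)"
      by (simp add: has_field_derivative_iff)
    from filterlim_compose[OF this hlim]
    have "(\<lambda>n. ((1 + h n) powr (-D) - 1) / h n) \<longlonglongrightarrow> -D" by simp
    from tendsto_mult_right[OF this, of C] show ?thesis unfolding intQ by simp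
  qed
  define c where "c = 2 * B\<psi> * BG * R0"
  define W where "W x = wt \<alpha> x * (if norm x < R0 then c else 0)" for x
  have lim2: "(\<lambda>n. \<integral>x. Q n x \<partial>lborel) \<longlonglongrightarrow> (\<integral>x. wt \<alpha> x * (2 * \<psi> x * (G x \<bullet> x)) \<partial>lborel)"
  proof (rule integral_dominated_convergence[where w=W])
    show "(\<lambda>x. wt \<alpha> x * (2 * \<psi> x * (G x \<bullet> x))) \<in> borel_measurable lborel" by measurable
    show "Q n \<in> borel_measurable lborel" for n unfolding Q_def by measurable
    show "integrable lborel W" unfolding W_def
      by (rule int_wt[OF \<alpha>, where B="\<bar>c\<bar>" and R=R0]) auto
    show "AE x in lborel. (\<lambda>n. Q n x) \<longlonglongrightarrow> wt \<alpha> x * (2 * \<psi> x * (G x \<bullet> x))"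
    proof (rule AE_I2)
      fix x
      have "((\<lambda>y. ((\<psi> (y *\<^sub>R x))^2 - (\<psi> (1 *\<^sub>R x))^2) / (y - 1)) \<longlongrightarrow> 2 * \<psi> (1 *\<^sub>R x) * (G (1 *\<^sub>R x) \<bullet> x)) (at 1)"
        using scale_deriv[OF der, of x 1] by (simp add: has_field_derivative_iff)
      from filterlim_compose[OF this hlim]
      have "(\<lambda>n. ((\<psi> ((1 + h n) *\<^sub>R x))^2 - (\<psi> x)^2) / h n) \<longlonglongrightarrow> 2 * \<psi> x * (G x \<bullet> x)" by simp
      from tendsto_mult_left[OF this, of "wt \<alpha> x"]
      show "(\<lambda>n. Q n x) \<longlonglongrightarrow> wt \<alpha> x * (2 * \<psi> x * (G x \<bullet> x))" unfolding Q_def .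
    qed
    show "AE x in lborel. norm (Q n x) \<le> W x" for n
    proof (rule AE_I2)
      fix x
      show "norm (Q n x) \<le> W x"
      proof (cases "norm x < R0")
        case False
        have "norm x \<le> norm ((1 + h n) *\<^sub>R x)" using h[of n] by (simp add: mult_le_cancel_right1)
        then have "\<psi> ((1 + h n) *\<^sub>R x) = 0" "\<psi> x = 0" using R0(2) False by auto
        then show ?thesis using False unfolding Q_def W_def by simp
      next
        case True
        obtain z where z: "1 < z" "z < 1 + h n"
          "(\<psi> ((1 + h n) *\<^sub>R x))^2 - (\<psi> (1 *\<^sub>R x))^2 = ((1 + h n) - 1) * (2 * \<psi> (z *\<^sub>R x) * (G (z *\<^sub>R x) \<bullet> x))"
          using MVT2[of 1 "1 + h n" "\<lambda>s. (\<psi> (s *\<^sub>R x))^2" "\<lambda>s. 2 * \<psi> (s *\<^sub>R x) * (G (s *\<^sub>R x) \<bullet> x)"]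
            scale_deriv[OF der, of x] h[of n] by auto
        have Qeq: "Q n x = wt \<alpha> x * (2 * \<psi> (z *\<^sub>R x) * (G (z *\<^sub>R x) \<bullet> x))"
          unfolding Q_def using z(3) h[of n] by simp
        have "norm (z *\<^sub>R x) \<le> 2 * R0" using z True h[of n] 
          by (simp add: mult_mono' order_less_imp_le)
        then have nG: "norm (G (z *\<^sub>R x)) \<le> BG" using BG by auto
        have "\<bar>G (z *\<^sub>R x) \<bullet> x\<bar> \<le> norm (G (z *\<^sub>R x)) * norm x" by (rule Cauchy_Schwarz_ineq2)
        also have "\<dots> \<le> BG * R0" using nG True BG(2) by (intro mult_mono) auto
        finally have i1: "\<bar>G (z *\<^sub>R x) \<bullet> x\<bar> \<le> BG * R0" .
        have "\<bar>2 * \<psi> (z *\<^sub>R x) * (G (z *\<^sub>R x) \<bullet> x)\<bar> = 2 * \<bar>\<psi> (z *\<^sub>R x)\<bar> * \<bar>G (z *\<^sub>R x) \<bullet> x\<bar>"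
          by (simp add: abs_mult)
        also have "\<dots> \<le> 2 * B\<psi> * (BG * R0)" using B\<psi> i1 by (intro mult_mono) auto
        finally have "\<bar>2 * \<psi> (z *\<^sub>R x) * (G (z *\<^sub>R x) \<bullet> x)\<bar> \<le> c" unfolding c_def by simp
        then show ?thesis unfolding Qeq W_def using True wt_nonneg[of \<alpha> x]
          by (simp add: abs_mult mult_left_mono)
      qed
    qed
  qed
  have "-D * C = (\<integral>x. wt \<alpha> x * (2 * \<psi> x * (G x \<bullet> x)) \<partial>lborel)"
    using LIMSEQ_unique[OF lim1 lim2] .
  also have "(\<lambda>x. wt \<alpha> x * (2 * \<psi> x * (G x \<bullet> x))) = (\<lambda>x. 2 * (wt \<alpha> x * (\<psi> x * (G x \<bullet> x))))"
    by (auto simp: fun_eq_iff mult_ac)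
  also have "(\<integral>x. 2 * (wt \<alpha> x * (\<psi> x * (G x \<bullet> x))) \<partial>lborel) = 2 * (\<integral>x. wt \<alpha> x * (\<psi> x * (G x \<bullet> x)) \<partial>lborel)"
    by (rule integral_mult_right_zero)
  finally show ?thesis unfolding D_def[symmetric] C_def[symmetric] by simp
qed



lemma sq_sum_le: "(norm (a + b :: 'b::real_normed_vector))^2 \<le> 2 * (norm a)^2 + 2 * (norm b)^2"
proof -
  have "norm (a + b) \<le> norm a + norm b" by (rule norm_triangle_ineq)
  then have "(norm (a + b))^2 \<le> (norm a + norm b)^2" by (simp add: power_mono)
  also have "\<dots> \<le> 2 * (norm a)^2 + 2 * (norm b)^2"
  proof -
    have "0 \<le> (norm a - norm b)^2" by simp
    then show ?thesis unfolding power2_sum power2_diff by linarith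
  qed
  finally show ?thesis .
qed

lemma sq_diff_le: "(norm (a - b :: 'b::real_normed_vector))^2 \<le> 2 * (norm a)^2 + 2 * (norm b)^2"
  using sq_sum_le[of a "-b"] by simp

lemma int_sq_diff:
  fixes a b :: "'a \<Rightarrow> 'b::euclidean_space"
  assumes [measurable]: "a \<in> borel_measurable M" "b \<in> borel_measurable M"
    and "integrable M (\<lambda>x. (norm (a x))^2)" "integrable M (\<lambda>x. (norm (b x))^2)"
  shows "integrable M (\<lambda>x. (norm (a x - b x))^2)"
proof (rule Bochner_Integration.integrable_bound[where f="\<lambda>x. 2 * (norm (a x))^2 + 2 * (norm (b x))^2"])
  show "integrable M (\<lambda>x. 2 * (norm (a x))^2 + 2 * (norm (b x))^2)" using assms by auto
  show "(\<lambda>x. (norm (a x - b x))\<^sup>2) \<in> borel_measurable M" by measurable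
  show "AE x in M. norm ((norm (a x - b x))\<^sup>2) \<le> norm (2 * (norm (a x))\<^sup>2 + 2 * (norm (b x))\<^sup>2)"
    using sq_diff_le by auto
qed

lemma CS:
  fixes a b :: "'a \<Rightarrow> 'b::euclidean_space"
  assumes [measurable]: "a \<in> borel_measurable M" "b \<in> borel_measurable M"
    and ia: "integrable M (\<lambda>x. (norm (a x))^2)" and ib: "integrable M (\<lambda>x. (norm (b x))^2)"
  shows CS_int2: "integrable M (\<lambda>x. norm (a x) * norm (b x))"
    and CS_int: "integrable M (\<lambda>x. a x \<bullet> b x)"
    and CS_le: "\<bar>\<integral>x. a x \<bullet> b x \<partial>M\<bar> \<le> sqrt (\<integral>x. (norm (a x))^2 \<partial>M) * sqrt (\<integral>x. (norm (b x))^2 \<partial>M)"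
proof -
  show i2: "integrable M (\<lambda>x. norm (a x) * norm (b x))"
  proof (rule Bochner_Integration.integrable_bound[where f="\<lambda>x. (norm (a x))^2 + (norm (b x))^2"])
    show "integrable M (\<lambda>x. (norm (a x))^2 + (norm (b x))^2)" using ia ib by auto
    show "(\<lambda>x. norm (a x) * norm (b x)) \<in> borel_measurable M" by measurable
    show "AE x in M. norm (norm (a x) * norm (b x)) \<le> norm ((norm (a x))^2 + (norm (b x))^2)"
    proof (intro AE_I2)
      fix x
      have "2 * norm (a x) * norm (b x) \<le> (norm (a x))^2 + (norm (b x))^2"
        using sum_squares_bound[of "norm (a x)" "norm (b x)"] by simp
      moreover have "0 \<le> norm (a x) * norm (b x)" by simp
      ultimately have "norm (a x) * norm (b x) \<le> (norm (a x))^2 + (norm (b x))^2"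
        by (simp only: mult.assoc)
      then show "norm (norm (a x) * norm (b x)) \<le> norm ((norm (a x))^2 + (norm (b x))^2)"
        by simp
    qed
  qed
  show i1: "integrable M (\<lambda>x. a x \<bullet> b x)"
  proof (rule Bochner_Integration.integrable_bound[OF i2])
    show "(\<lambda>x. a x \<bullet> b x) \<in> borel_measurable M" by measurable
    show "AE x in M. norm (a x \<bullet> b x) \<le> norm (norm (a x) * norm (b x))"
      by (intro AE_I2) (simp add: Cauchy_Schwarz_ineq2)
  qed
  define A where "A = (\<integral>x. (norm (a x))^2 \<partial>M)"
  define B where "B = (\<integral>x. (norm (b x))^2 \<partial>M)"
  define X where "X = (\<integral>x. norm (a x) * norm (b x) \<partial>M)"
  have "\<bar>\<integral>x. a x \<bullet> b x \<partial>M\<bar> \<le> (\<integral>x. \<bar>a x \<bullet> b x\<bar> \<partial>M)" by (rule integral_abs_bound)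
  also have "\<dots> \<le> X" unfolding X_def
    using i1 i2 by (intro integral_mono) (auto simp: Cauchy_Schwarz_ineq2)
  finally have 1: "\<bar>\<integral>x. a x \<bullet> b x \<partial>M\<bar> \<le> X" .
  have X0: "X \<ge> 0" unfolding X_def by auto
  have A0: "A \<ge> 0" "B \<ge> 0" unfolding A_def B_def by auto
  have eX: "ennreal X = (\<integral>\<^sup>+x. ennreal (norm (a x)) * ennreal (norm (b x)) \<partial>M)"
    unfolding X_def using i2 by (subst nn_integral_eq_integral[symmetric]) (auto simp: ennreal_mult)
  have eA: "ennreal A = (\<integral>\<^sup>+x. (ennreal (norm (a x)))^2 \<partial>M)"
    unfolding A_def using ia by (subst nn_integral_eq_integral[symmetric]) (auto simp: ennreal_power)
  have eB: "ennreal B = (\<integral>\<^sup>+x. (ennreal (norm (b x)))^2 \<partial>M)"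
    unfolding B_def using ib by (subst nn_integral_eq_integral[symmetric]) (auto simp: ennreal_power)
  have "(ennreal X)^2 \<le> ennreal A * ennreal B"
    unfolding eX eA eB by (rule Cauchy_Schwarz_nn_integral) auto
  then have "ennreal (X^2) \<le> ennreal (A * B)"
    using X0 A0 by (simp add: ennreal_power ennreal_mult)
  then have "X^2 \<le> A * B" using A0 by (simp add: ennreal_le_iff)
  then have "X \<le> sqrt (A * B)" by (rule real_le_rsqrt)
  then have "X \<le> sqrt A * sqrt B" by (simp add: real_sqrt_mult)
  with 1 show "\<bar>\<integral>x. a x \<bullet> b x \<partial>M\<bar> \<le> sqrt (\<integral>x. (norm (a x))^2 \<partial>M) * sqrt (\<integral>x. (norm (b x))^2 \<partial>M)"
    unfolding A_def B_def by simp
qed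

lemma prod_conv:
  fixes ak bk :: "nat \<Rightarrow> 'a \<Rightarrow> 'b::euclidean_space" and a b :: "'a \<Rightarrow> 'b"
  assumes [measurable]: "\<And>k. ak k \<in> borel_measurable M" "\<And>k. bk k \<in> borel_measurable M"
    "a \<in> borel_measurable M" "b \<in> borel_measurable M"
    and iak: "\<And>k. integrable M (\<lambda>x. (norm (ak k x))^2)" and ia: "integrable M (\<lambda>x. (norm (a x))^2)"
    and ibk: "\<And>k. integrable M (\<lambda>x. (norm (bk k x))^2)" and ib: "integrable M (\<lambda>x. (norm (b x))^2)"
    and ca: "(\<lambda>k. \<integral>x. (norm (ak k x - a x))^2 \<partial>M) \<longlonglongrightarrow> 0"
    and cb: "(\<lambda>k. \<integral>x. (norm (bk k x - b x))^2 \<partial>M) \<longlonglongrightarrow> 0"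
  shows "(\<lambda>k. \<integral>x. ak k x \<bullet> bk k x \<partial>M) \<longlonglongrightarrow> (\<integral>x. a x \<bullet> b x \<partial>M)"
proof (rule LIM_zero_cancel, rule Lim_null_comparison)
  define Ak where "Ak k = (\<integral>x. (norm (ak k x - a x))^2 \<partial>M)" for k
  define Bk where "Bk k = (\<integral>x. (norm (bk k x - b x))^2 \<partial>M)" for k
  define A where "A = (\<integral>x. (norm (a x))^2 \<partial>M)"
  define B where "B = (\<integral>x. (norm (b x))^2 \<partial>M)"
  have ida: "integrable M (\<lambda>x. (norm (ak k x - a x))^2)" for k by (rule int_sq_diff) (auto intro: iak ia)
  have idb: "integrable M (\<lambda>x. (norm (bk k x - b x))^2)" for k by (rule int_sq_diff) (auto intro: ibk ib)
  show "\<forall>\<^sub>F k in sequentially. norm ((\<integral>x. ak k x \<bullet> bk k x \<partial>M) - (\<integral>x. a x \<bullet> b x \<partial>M))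
      \<le> sqrt (Ak k) * sqrt (Bk k) + sqrt (Ak k) * sqrt B + sqrt A * sqrt (Bk k)"
  proof (intro always_eventually allI)
    fix k
    have i1: "integrable M (\<lambda>x. (ak k x - a x) \<bullet> (bk k x - b x))" by (rule CS_int) (auto intro: ida idb)
    have i2: "integrable M (\<lambda>x. (ak k x - a x) \<bullet> b x)" by (rule CS_int) (auto intro: ida ib)
    have i3: "integrable M (\<lambda>x. a x \<bullet> (bk k x - b x))" by (rule CS_int) (auto intro: ia idb)
    have i4: "integrable M (\<lambda>x. ak k x \<bullet> bk k x)" by (rule CS_int) (auto intro: iak ibk)
    have i5: "integrable M (\<lambda>x. a x \<bullet> b x)" by (rule CS_int) (auto intro: ia ib)
    have "(\<integral>x. ak k x \<bullet> bk k x \<partial>M) - (\<integral>x. a x \<bullet> b x \<partial>M) = (\<integral>x. ak k x \<bullet> bk k x - a x \<bullet> b x \<partial>M)"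
      using i4 i5 by simp
    also have "\<dots> = (\<integral>x. (ak k x - a x) \<bullet> (bk k x - b x) + (ak k x - a x) \<bullet> b x + a x \<bullet> (bk k x - b x) \<partial>M)"
      by (intro Bochner_Integration.integral_cong refl) (simp add: inner_diff_left inner_diff_right)
    also have "\<dots> = (\<integral>x. (ak k x - a x) \<bullet> (bk k x - b x) \<partial>M) + (\<integral>x. (ak k x - a x) \<bullet> b x \<partial>M) + (\<integral>x. a x \<bullet> (bk k x - b x) \<partial>M)"
      using i1 i2 i3 by simp
    finally have eq: "(\<integral>x. ak k x \<bullet> bk k x \<partial>M) - (\<integral>x. a x \<bullet> b x \<partial>M) = \<dots>" .
    have "\<bar>\<integral>x. (ak k x - a x) \<bullet> (bk k x - b x) \<partial>M\<bar> \<le> sqrt (Ak k) * sqrt (Bk k)"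
      unfolding Ak_def Bk_def by (rule CS_le) (auto intro: ida idb)
    moreover have "\<bar>\<integral>x. (ak k x - a x) \<bullet> b x \<partial>M\<bar> \<le> sqrt (Ak k) * sqrt B"
      unfolding Ak_def B_def by (rule CS_le) (auto intro: ida ib)
    moreover have "\<bar>\<integral>x. a x \<bullet> (bk k x - b x) \<partial>M\<bar> \<le> sqrt A * sqrt (Bk k)"
      unfolding A_def Bk_def by (rule CS_le) (auto intro: ia idb)
    ultimately show "norm ((\<integral>x. ak k x \<bullet> bk k x \<partial>M) - (\<integral>x. a x \<bullet> b x \<partial>M))
      \<le> sqrt (Ak k) * sqrt (Bk k) + sqrt (Ak k) * sqrt B + sqrt A * sqrt (Bk k)"
      unfolding eq by simp
  qed
  have sA: "(\<lambda>k. sqrt (Ak k)) \<longlonglongrightarrow> 0" using tendsto_real_sqrt[OF ca] unfolding Ak_def by simp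
  have sB: "(\<lambda>k. sqrt (Bk k)) \<longlonglongrightarrow> 0" using tendsto_real_sqrt[OF cb] unfolding Bk_def by simp
  show "(\<lambda>k. sqrt (Ak k) * sqrt (Bk k) + sqrt (Ak k) * sqrt B + sqrt A * sqrt (Bk k)) \<longlonglongrightarrow> 0"
    using tendsto_add[OF tendsto_add[OF tendsto_mult[OF sA sB] tendsto_mult_right[OF sA]] tendsto_mult_left[OF sB]]
    by simp
qed

lemma L2_limit:
  fixes F :: "nat \<Rightarrow> 'a \<Rightarrow> 'b::euclidean_space" and F0 :: "'a \<Rightarrow> 'b"
  assumes [measurable]: "\<And>k. F k \<in> borel_measurable M" "F0 \<in> borel_measurable M"
    and iF: "\<And>k. integrable M (\<lambda>x. (norm (F k x))^2)"
    and c: "(\<lambda>k. \<integral>\<^sup>+x. ennreal ((norm (F k x - F0 x))^2) \<partial>M) \<longlonglongrightarrow> 0"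
  shows L2_limit_int: "integrable M (\<lambda>x. (norm (F0 x))^2)"
    and L2_limit_conv: "(\<lambda>k. \<integral>x. (norm (F k x - F0 x))^2 \<partial>M) \<longlonglongrightarrow> 0"
proof -
  obtain N where N: "\<And>n. n \<ge> N \<Longrightarrow> (\<integral>\<^sup>+x. ennreal ((norm (F n x - F0 x))^2) \<partial>M) < 1"
    using order_tendstoD(2)[OF c, of 1] by (auto simp: eventually_sequentially)
  have idN: "integrable M (\<lambda>x. (norm (F N x - F0 x))^2)"
    by (rule integrableI_nonneg) (use N[of N] in \<open>auto simp: less_top[symmetric] intro: order.strict_trans\<close>)
  have "integrable M (\<lambda>x. (norm (F N x - (F N x - F0 x)))^2)"
    by (rule int_sq_diff) (auto intro: iF idN)
  then show i0: "integrable M (\<lambda>x. (norm (F0 x))^2)" by simp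
  have id: "integrable M (\<lambda>x. (norm (F k x - F0 x))^2)" for k
    by (rule int_sq_diff) (auto intro: iF i0)
  have "(\<lambda>k. ennreal (\<integral>x. (norm (F k x - F0 x))^2 \<partial>M)) \<longlonglongrightarrow> 0"
    using c by (subst (asm) nn_integral_eq_integral[OF id]) auto
  then show "(\<lambda>k. \<integral>x. (norm (F k x - F0 x))^2 \<partial>M) \<longlonglongrightarrow> 0"
    by (subst (asm) ennreal_tendsto_0_iff) auto
qed

lemma L_lemma:
  fixes M :: "(real^'n) measure" and p :: "nat \<Rightarrow> real^'n \<Rightarrow> real" and u :: "real^'n \<Rightarrow> real"
    and f :: "nat \<Rightarrow> real^'n \<Rightarrow> real^'n" and g :: "real^'n \<Rightarrow> real^'n" and D :: real
  assumes [measurable]: "\<And>k. p k \<in> borel_measurable M" "u \<in> borel_measurable M"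
    "\<And>k. f k \<in> borel_measurable M" "g \<in> borel_measurable M" "(\<lambda>x. x) \<in> borel_measurable M"
    and ip: "\<And>k. integrable M (\<lambda>x. (p k x)^2)"
    and ipx: "\<And>k. integrable M (\<lambda>x. (norm (p k x *\<^sub>R x))^2)"
    and iff: "\<And>k. integrable M (\<lambda>x. (norm (f k x))^2)"
    and cf: "(\<lambda>k. \<integral>\<^sup>+x. ennreal ((norm (f k x - g x))^2) \<partial>M) \<longlonglongrightarrow> 0"
    and cp: "(\<lambda>k. \<integral>\<^sup>+x. ennreal ((norm (p k x *\<^sub>R x - u x *\<^sub>R x))^2) \<partial>M) \<longlonglongrightarrow> 0"
    and Dpos: "D > 0"
    and Hdiff: "\<And>k m. D * (\<integral>x. (p k x - p m x)^2 \<partial>M) = -2 * (\<integral>x. (p k x - p m x) * ((f k x - f m x) \<bullet> x) \<partial>M)"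
    and Hk: "\<And>k. D * (\<integral>x. (p k x)^2 \<partial>M) = -2 * (\<integral>x. p k x * (f k x \<bullet> x) \<partial>M)"
    and nz: "AE x in M. x \<noteq> 0"
  shows L_int_u: "integrable M (\<lambda>x. (u x)^2)"
    and L_int_g: "integrable M (\<lambda>x. (norm (g x))^2)"
    and L_int_ux: "integrable M (\<lambda>x. (norm (u x *\<^sub>R x))^2)"
    and L_eq: "D * (\<integral>x. (u x)^2 \<partial>M) = -2 * (\<integral>x. (u x *\<^sub>R x) \<bullet> g x \<partial>M)"
proof -
  define P where "P k x = p k x *\<^sub>R x" for k x
  define U where "U x = u x *\<^sub>R x" for x
  have [measurable]: "P k \<in> borel_measurable M" "U \<in> borel_measurable M" for k
    unfolding P_def[abs_def] U_def[abs_def] by measurable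
  have iP: "integrable M (\<lambda>x. (norm (P k x))^2)" for k unfolding P_def using ipx .
  have ip': "integrable M (\<lambda>x. (norm (p k x))^2)" for k using ip[of k] by simp
  show ig: "integrable M (\<lambda>x. (norm (g x))^2)"
    by (rule L2_limit_int[OF _ _ iff cf]) auto
  define A where "A k = (\<integral>x. (norm (f k x - g x))^2 \<partial>M)" for k
  have A: "A \<longlonglongrightarrow> 0" unfolding A_def[abs_def] by (rule L2_limit_conv[OF _ _ iff cf]) auto
  have cp': "(\<lambda>k. \<integral>\<^sup>+x. ennreal ((norm (P k x - U x))^2) \<partial>M) \<longlonglongrightarrow> 0"
    using cp unfolding P_def U_def .
  have iU: "integrable M (\<lambda>x. (norm (U x))^2)"
    by (rule L2_limit_int[OF _ _ iP cp']) auto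
  then show "integrable M (\<lambda>x. (norm (u x *\<^sub>R x))^2)" unfolding U_def .
  define B where "B k = (\<integral>x. (norm (P k x - U x))^2 \<partial>M)" for k
  have B: "B \<longlonglongrightarrow> 0" unfolding B_def[abs_def] by (rule L2_limit_conv[OF _ _ iP cp']) auto
  have A0: "A k \<ge> 0" "B k \<ge> 0" for k unfolding A_def B_def by auto
  have ifg: "integrable M (\<lambda>x. (norm (f k x - g x))^2)" for k by (rule int_sq_diff) (auto intro: iff ig)
  have iPU: "integrable M (\<lambda>x. (norm (P k x - U x))^2)" for k by (rule int_sq_diff) (auto intro: iP iU)
  define c where "c k = 2 / D * (A k + B k)" for k
  have c: "c \<longlonglongrightarrow> 0" unfolding c_def[abs_def] using tendsto_mult[OF tendsto_const[of "2/D"] tendsto_add[OF A B]]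
    by (simp only: add_0 mult_zero_right)
  have c0: "c k \<ge> 0" for k unfolding c_def using A0 Dpos by auto
  have cauchy: "(\<integral>x. (p k x - p m x)^2 \<partial>M) \<le> c k + c m" for k m
  proof -
    have ifd: "integrable M (\<lambda>x. (norm (f k x - f m x))^2)" by (rule int_sq_diff) (auto intro: iff)
    have iPd: "integrable M (\<lambda>x. (norm (P k x - P m x))^2)" by (rule int_sq_diff) (auto intro: iP)
    have eqP: "P k x - P m x = (p k x - p m x) *\<^sub>R x" for x unfolding P_def by (simp add: scaleR_diff_left)
    have iprod: "integrable M (\<lambda>x. (P k x - P m x) \<bullet> (f k x - f m x))"
      by (rule CS_int) (auto intro: ifd iPd)
    have iprod': "integrable M (\<lambda>x. (p k x - p m x) * ((f k x - f m x) \<bullet> x))"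
      using iprod unfolding eqP by (simp add: inner_commute)
    have pt: "-2 * ((p k x - p m x) * ((f k x - f m x) \<bullet> x)) \<le> (norm (P k x - P m x))^2 + (norm (f k x - f m x))^2" for x
    proof -
      have "\<bar>(p k x - p m x) * ((f k x - f m x) \<bullet> x)\<bar> = \<bar>(P k x - P m x) \<bullet> (f k x - f m x)\<bar>"
        unfolding eqP by (simp add: inner_commute)
      also have "\<dots> \<le> norm (P k x - P m x) * norm (f k x - f m x)" by (rule Cauchy_Schwarz_ineq2)
      finally have "\<bar>(p k x - p m x) * ((f k x - f m x) \<bullet> x)\<bar> \<le> norm (P k x - P m x) * norm (f k x - f m x)" .
      moreover have "2 * norm (P k x - P m x) * norm (f k x - f m x) \<le> (norm (P k x - P m x))^2 + (norm (f k x - f m x))^2"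
        by (rule sum_squares_bound)
      ultimately show ?thesis by linarith
    qed
    have "D * (\<integral>x. (p k x - p m x)^2 \<partial>M) = (\<integral>x. -2 * ((p k x - p m x) * ((f k x - f m x) \<bullet> x)) \<partial>M)"
      unfolding Hdiff by simp
    also have "\<dots> \<le> (\<integral>x. (norm (P k x - P m x))^2 + (norm (f k x - f m x))^2 \<partial>M)"
      using iprod' ifd iPd pt by (intro integral_mono) auto
    also have "\<dots> = (\<integral>x. (norm (P k x - P m x))^2 \<partial>M) + (\<integral>x. (norm (f k x - f m x))^2 \<partial>M)"
      using ifd iPd by simp
    also have "(\<integral>x. (norm (P k x - P m x))^2 \<partial>M) \<le> (\<integral>x. 2 * (norm (P k x - U x))^2 + 2 * (norm (P m x - U x))^2 \<partial>M)"
      using iPd iPU sq_diff_le[of "P k x - U x" "P m x - U x" for x] by (intro integral_mono) auto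
    also have "\<dots> = 2 * B k + 2 * B m" unfolding B_def using iPU by simp
    also have "(\<integral>x. (norm (f k x - f m x))^2 \<partial>M) \<le> (\<integral>x. 2 * (norm (f k x - g x))^2 + 2 * (norm (f m x - g x))^2 \<partial>M)"
      using ifd ifg sq_diff_le[of "f k x - g x" "f m x - g x" for x] by (intro integral_mono) auto
    also have "\<dots> = 2 * A k + 2 * A m" unfolding A_def using ifg by simp
    finally have "D * (\<integral>x. (p k x - p m x)^2 \<partial>M) \<le> 2 * B k + 2 * B m + (2 * A k + 2 * A m)" by simp
    then have "(\<integral>x. (p k x - p m x)^2 \<partial>M) \<le> (2 * B k + 2 * B m + (2 * A k + 2 * A m)) / D"
      using Dpos by (simp add: pos_le_divide_eq mult.commute)
    moreover have "c k + c m = (2 * B k + 2 * B m + (2 * A k + 2 * A m)) / D"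
      unfolding c_def using Dpos by (simp add: field_simps)
    ultimately show ?thesis by simp
  qed
  obtain r where r: "strict_mono r" and rAE: "AE x in M. (\<lambda>n. (norm (P (r n) x - U x))^2) \<longlonglongrightarrow> 0"
  proof -
    have "\<exists>r::nat\<Rightarrow>nat. strict_mono r \<and> (AE x in M. (\<lambda>n. (norm (P (r n) x - U x))^2) \<longlonglongrightarrow> 0)"
      by (rule tendsto_L1_AE_subseq) (use iPU B[unfolded B_def[abs_def]] in auto)
    then show ?thesis using that by blast
  qed
  have pconv: "AE x in M. (\<lambda>n. p (r n) x) \<longlonglongrightarrow> u x"
    using rAE nz
  proof eventually_elim
    case (elim x)
    have nx: "norm x > 0" using elim(2) by simp
    have "(norm (P n x - U x))^2 = (p n x - u x)^2 * (norm x)^2" for n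
      unfolding P_def U_def by (simp add: scaleR_diff_left[symmetric] power_mult_distrib)
    with elim(1) have "(\<lambda>n. (p (r n) x - u x)^2 * (norm x)^2) \<longlonglongrightarrow> 0" by simp
    from tendsto_divide[OF this tendsto_const[of "(norm x)^2"]] nx
    have "(\<lambda>n. (p (r n) x - u x)^2) \<longlonglongrightarrow> 0" by simp
    from tendsto_real_sqrt[OF this] have "(\<lambda>n. \<bar>p (r n) x - u x\<bar>) \<longlonglongrightarrow> 0" by simp
    then have "(\<lambda>n. p (r n) x - u x) \<longlonglongrightarrow> 0" by (simp add: tendsto_rabs_zero_iff)
    then show ?case by (rule LIM_zero_cancel)
  qed
  have fatou: "(\<integral>\<^sup>+x. ennreal ((p k x - u x)^2) \<partial>M) \<le> ennreal (c k)" for k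
  proof -
    have "(\<integral>\<^sup>+x. ennreal ((p k x - u x)^2) \<partial>M) = (\<integral>\<^sup>+x. liminf (\<lambda>n. ennreal ((p k x - p (r n) x)^2)) \<partial>M)"
      using pconv
    proof (intro nn_integral_cong_AE, eventually_elim)
      case (elim x)
      have "(\<lambda>n. ennreal ((p k x - p (r n) x)^2)) \<longlonglongrightarrow> ennreal ((p k x - u x)^2)"
        by (intro tendsto_ennrealI tendsto_intros elim)
      from lim_imp_Liminf[OF trivial_limit_sequentially this] show ?case by (rule sym)
    qed
    also have "\<dots> \<le> liminf (\<lambda>n. \<integral>\<^sup>+x. ennreal ((p k x - p (r n) x)^2) \<partial>M)"
      by (rule nn_integral_liminf) measurable
    also have "\<dots> \<le> liminf (\<lambda>n. ennreal (c k + c (r n)))"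
    proof (intro Liminf_mono always_eventually allI)
      fix n
      have "integrable M (\<lambda>x. (norm (p k x - p (r n) x))^2)" by (rule int_sq_diff) (auto intro: ip' ip)
      then have "(\<integral>\<^sup>+x. ennreal ((p k x - p (r n) x)^2) \<partial>M) = ennreal (\<integral>x. (p k x - p (r n) x)^2 \<partial>M)"
        by (subst nn_integral_eq_integral) auto
      also have "\<dots> \<le> ennreal (c k + c (r n))" using cauchy by (intro ennreal_leI) auto
      finally show "(\<integral>\<^sup>+x. ennreal ((p k x - p (r n) x)^2) \<partial>M) \<le> ennreal (c k + c (r n))" .
    qed
    also have "liminf (\<lambda>n. ennreal (c k + c (r n))) = ennreal (c k)"
    proof (rule lim_imp_Liminf)
      have "(\<lambda>n. c (r n)) \<longlonglongrightarrow> 0" using LIMSEQ_subseq_LIMSEQ[OF c r] by (simp add: o_def)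
      from tendsto_add[OF tendsto_const[of "c k"] this]
      show "(\<lambda>n. ennreal (c k + c (r n))) \<longlonglongrightarrow> ennreal (c k)"
        by (intro tendsto_ennrealI) simp
    qed simp
    finally show ?thesis .
  qed
  have ipu: "integrable M (\<lambda>x. (p k x - u x)^2)" for k
    by (rule integrableI_nonneg) (use fatou[of k] in \<open>auto intro: le_less_trans\<close>)
  have "integrable M (\<lambda>x. (norm (p 0 x - (p 0 x - u x)))^2)"
    by (rule int_sq_diff) (use ip' ipu in auto)
  then show iu: "integrable M (\<lambda>x. (u x)^2)" by simp
  define E where "E k = (\<integral>x. (p k x - u x)^2 \<partial>M)" for k
  have E: "E k \<le> c k" for k
  proof -
    have "ennreal (E k) \<le> ennreal (c k)" unfolding E_def
      using fatou[of k] nn_integral_eq_integral[OF ipu[of k]] by simp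
    then show ?thesis using c0[of k] by (simp add: ennreal_le_iff)
  qed
  have E0: "E k \<ge> 0" for k unfolding E_def by auto
  have Econv: "E \<longlonglongrightarrow> 0"
    by (rule tendsto_sandwich[OF _ _ tendsto_const c]) (use E E0 in auto)
  have conv1: "(\<lambda>k. \<integral>x. p k x \<bullet> p k x \<partial>M) \<longlonglongrightarrow> (\<integral>x. u x \<bullet> u x \<partial>M)"
    by (rule prod_conv) (use ip' iu Econv[unfolded E_def[abs_def]] in auto)
  have conv2: "(\<lambda>k. \<integral>x. P k x \<bullet> f k x \<partial>M) \<longlonglongrightarrow> (\<integral>x. U x \<bullet> g x \<partial>M)"
    by (rule prod_conv) (use iP iU iff ig A[unfolded A_def[abs_def]] B[unfolded B_def[abs_def]] in auto)
  have l1: "(\<lambda>k. D * (\<integral>x. (p k x)^2 \<partial>M)) \<longlonglongrightarrow> D * (\<integral>x. (u x)^2 \<partial>M)"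
    using tendsto_mult_left[OF conv1, of D] by (simp add: power2_eq_square)
  have l2: "(\<lambda>k. D * (\<integral>x. (p k x)^2 \<partial>M)) \<longlonglongrightarrow> -2 * (\<integral>x. U x \<bullet> g x \<partial>M)"
  proof -
    have "P k x \<bullet> f k x = p k x * (f k x \<bullet> x)" for k x unfolding P_def by (simp add: inner_commute)
    then show ?thesis using tendsto_mult_left[OF conv2, of "-2"] unfolding Hk by simp
  qed
  show "D * (\<integral>x. (u x)^2 \<partial>M) = -2 * (\<integral>x. (u x *\<^sub>R x) \<bullet> g x \<partial>M)"
    using LIMSEQ_unique[OF l1 l2] unfolding U_def .
qed



lemma Nstar_diff: "\<phi> \<in> Nstar \<alpha> \<Longrightarrow> \<phi> differentiable (at x)"
  unfolding Nstar_def smooth_def using dpart.simps(1) by (metis (mono_tags, lifting) mem_Collect_eq)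

lemma dpart1_frechet:
  assumes "\<phi> differentiable (at x)"
  shows "dpart1 i \<phi> x = frechet_derivative \<phi> (at x) (axis i 1)"
proof -
  define \<phi>' where "\<phi>' = frechet_derivative \<phi> (at x)"
  have d: "(\<phi> has_derivative \<phi>') (at x)" using assms unfolding \<phi>'_def by (simp add: frechet_derivative_works)
  then have d0: "(\<phi> has_derivative \<phi>') (at (x + 0 *\<^sub>R axis i 1))" by simp
  have "((\<lambda>t. x + t *\<^sub>R axis i (1::real)) has_derivative (\<lambda>t. t *\<^sub>R axis i 1)) (at 0)"
    by (auto intro!: derivative_eq_intros)
  from has_derivative_compose[OF this d0]
  have "((\<lambda>t. \<phi> (x + t *\<^sub>R axis i 1)) has_derivative (\<lambda>t. \<phi>' (t *\<^sub>R axis i 1))) (at 0)" .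
  moreover have "(\<lambda>t. \<phi>' (t *\<^sub>R axis i 1)) = (*) (\<phi>' (axis i 1))"
    using linear_scale[OF has_derivative_linear[OF d]] by (auto simp: fun_eq_iff)
  ultimately have "((\<lambda>t. \<phi> (x + t *\<^sub>R axis i 1)) has_real_derivative \<phi>' (axis i 1)) (at 0)"
    unfolding has_field_derivative_def by simp
  then show ?thesis unfolding dpart1_def \<phi>'_def by (rule DERIV_imp_deriv)
qed

lemma grad_deriv:
  assumes "\<phi> differentiable (at x)"
  shows "(\<phi> has_derivative (\<lambda>h. grad \<phi> x \<bullet> h)) (at x)"
proof -
  define \<phi>' where "\<phi>' = frechet_derivative \<phi> (at x)"
  have d: "(\<phi> has_derivative \<phi>') (at x)" using assms unfolding \<phi>'_def by (simp add: frechet_derivative_works)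
  have lin: "linear \<phi>'" by (rule has_derivative_linear[OF d])
  have "\<phi>' h = grad \<phi> x \<bullet> h" for h
  proof -
    have "\<phi>' h = \<phi>' (\<Sum>i\<in>UNIV. h$i *\<^sub>R axis i 1)"
      using basis_expansion[of h] by (simp add: scalar_mult_eq_scaleR)
    also have "\<dots> = (\<Sum>i\<in>UNIV. h$i * \<phi>' (axis i 1))"
      by (subst linear_sum[OF lin]) (simp add: linear_scale[OF lin])
    also have "\<dots> = grad \<phi> x \<bullet> h"
      unfolding grad_def inner_vec_def using dpart1_frechet[OF assms] \<phi>'_def by (simp add: mult.commute)
    finally show ?thesis .
  qed
  then have "\<phi>' = (\<lambda>h. grad \<phi> x \<bullet> h)" by auto
  with d show ?thesis by simp
qed

lemma grad_cont:
  assumes "\<phi> \<in> Nstar \<alpha>"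
  shows "continuous_on UNIV (grad \<phi>)"
proof -
  have "dpart1 i \<phi> differentiable (at x)" for i x
    using assms unfolding Nstar_def smooth_def by (metis (mono_tags, lifting) mem_Collect_eq dpart.simps)
  then have "continuous_on UNIV (dpart1 i \<phi>)" for i
    by (meson continuous_at_imp_continuous_on differentiable_imp_continuous_within)
  then have "continuous_on UNIV (\<lambda>x. \<chi> i. dpart1 i \<phi> x)" by (intro continuous_on_vec_lambda)
  then show ?thesis unfolding grad_def[abs_def] .
qed

lemma Nstar_supp:
  assumes "\<phi> \<in> Nstar \<alpha>"
  obtains R where "\<And>x. R \<le> norm x \<Longrightarrow> \<phi> x = 0" "\<And>x. R \<le> norm x \<Longrightarrow> grad \<phi> x = 0"
proof -
  have "bounded (closure {x. \<phi> x \<noteq> 0})" using assms unfolding Nstar_def by (auto intro: compact_imp_bounded)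
  then obtain R0 where R0: "\<And>y. y \<in> closure {x. \<phi> x \<noteq> 0} \<Longrightarrow> norm y \<le> R0"
    by (auto simp: bounded_iff)
  have z: "\<phi> y = 0" if "norm y > R0" for y
    using R0[of y] closure_subset[of "{x. \<phi> x \<noteq> 0}"] that by force
  have g: "grad \<phi> x = 0" if "R0 + 1 \<le> norm x" for x
  proof -
    have d: "(\<phi> has_derivative (\<lambda>h. grad \<phi> x \<bullet> h)) (at x)"
      by (rule grad_deriv[OF Nstar_diff[OF assms]])
    have "((\<lambda>_. 0) has_derivative (\<lambda>_. 0)) (at x)" by simp
    then have "(\<phi> has_derivative (\<lambda>_. 0)) (at x)"
    proof (rule has_derivative_transform_within_open)
      show "open {y. norm y > R0}" by (intro open_Collect_less) (auto intro: continuous_intros)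
      show "x \<in> {y. norm y > R0}" using that by simp
      show "\<And>y. y \<in> {y. norm y > R0} \<Longrightarrow> 0 = \<phi> y" using z by auto
    qed
    from has_derivative_unique[OF d this] have "grad \<phi> x \<bullet> grad \<phi> x = 0" by metis
    then show ?thesis by simp
  qed
  show ?thesis using that[of "R0 + 1"] z g by force
qed



lemma cont_bdd:
  fixes F :: "real^'n \<Rightarrow> real"
  assumes c: "continuous_on UNIV F" and s: "\<And>x. R \<le> norm x \<Longrightarrow> F x = 0"
  obtains B where "\<And>x. \<bar>F x\<bar> \<le> B"
proof -
  have "bounded (F ` cball 0 \<bar>R\<bar>)"
    by (intro compact_imp_bounded compact_continuous_image continuous_on_subset[OF c]) auto
  then obtain B where B: "\<forall>y\<in>F ` cball 0 \<bar>R\<bar>. norm y \<le> B" by (auto simp: bounded_iff)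
  have "\<bar>F x\<bar> \<le> max B 0" for x
  proof (cases "norm x \<le> \<bar>R\<bar>")
    case True then show ?thesis using B by force
  next
    case False then show ?thesis using s[of x] by auto
  qed
  then show ?thesis using that by blast
qed

lemma int_cont:
  fixes F :: "real^'n \<Rightarrow> real"
  assumes "\<forall>i. \<alpha>$i \<ge> 0" "continuous_on UNIV F" "\<And>x. R \<le> norm x \<Longrightarrow> F x = 0"
  shows "integrable lborel (\<lambda>x. wt \<alpha> x * F x)"
proof -
  obtain B where "\<And>x. \<bar>F x\<bar> \<le> B" using cont_bdd[OF assms(2,3)] by blast
  then show ?thesis
    by (intro int_wt[OF assms(1), where B=B and R=R]) (auto intro: borel_measurable_continuous_onI assms)
qed

definition Mw :: "real^'n \<Rightarrow> (real^'n) measure" where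
  "Mw \<alpha> = density lborel (\<lambda>x. ennreal (wt \<alpha> x))"

lemma sets_Mw[simp, measurable_cong]: "sets (Mw \<alpha>) = sets borel"
  unfolding Mw_def by simp

lemma meas_Mw: "f \<in> measurable borel N \<Longrightarrow> f \<in> measurable (Mw \<alpha>) N"
  using measurable_cong_sets[OF sets_Mw refl] by blast

lemma int_Mw:
  fixes f :: "real^'n \<Rightarrow> real"
  assumes "f \<in> borel_measurable borel"
  shows "integrable (Mw \<alpha>) f \<longleftrightarrow> integrable lborel (\<lambda>x. wt \<alpha> x * f x)"
  unfolding Mw_def using assms wt_nonneg by (subst integrable_density) auto

lemma integral_Mw:
  fixes f :: "real^'n \<Rightarrow> real"
  assumes "f \<in> borel_measurable borel"
  shows "integral\<^sup>L (Mw \<alpha>) f = (\<integral>x. wt \<alpha> x * f x \<partial>lborel)"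
  unfolding Mw_def using assms wt_nonneg by (subst integral_density) auto

lemma nn_Mw:
  assumes "f \<in> borel_measurable borel"
  shows "integral\<^sup>N (Mw \<alpha>) f = (\<integral>\<^sup>+x. ennreal (wt \<alpha> x) * f x \<partial>lborel)"
  unfolding Mw_def using assms by (subst nn_integral_density) auto

lemma set_conv:
  fixes F :: "real^'n \<Rightarrow> real"
  assumes "F \<in> borel_measurable borel"
  shows "(LINT x:Rstar \<alpha>|lborel. F x * wA \<alpha> x) = integral\<^sup>L (Mw \<alpha>) F"
  unfolding integral_Mw[OF assms] set_lebesgue_integral_def
  by (intro Bochner_Integration.integral_cong refl) (simp add: wt_def)

lemma set_nn_conv:
  fixes F :: "real^'n \<Rightarrow> real"
  assumes "F \<in> borel_measurable borel" "\<And>x. F x \<ge> 0"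
  shows "(\<integral>\<^sup>+x\<in>Rstar \<alpha>. ennreal (F x * wA \<alpha> x) \<partial>lborel) = (\<integral>\<^sup>+x. ennreal (F x) \<partial>Mw \<alpha>)"
  unfolding nn_Mw[OF measurable_compose[OF assms(1) measurable_ennreal]]
proof (intro nn_integral_cong)
  fix x
  show "ennreal (F x * wA \<alpha> x) * indicator (Rstar \<alpha>) x = ennreal (wt \<alpha> x) * ennreal (F x)"
    using assms(2)[of x] wA_nonneg[of \<alpha> x]
    by (cases "x \<in> Rstar \<alpha>") (auto simp: wt_def ennreal_mult mult.commute)
qed

lemma AE_Mw_nz: "AE x in Mw \<alpha>. x \<noteq> 0"
  unfolding Mw_def using AE_lborel_singleton[of 0]
  by (subst AE_density) (auto elim: eventually_mono)



lemma pointwise_id: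
  fixes g x :: "real^'n" and u L :: real
  assumes L: "L > 0"
  shows "(norm (exp ((norm x)\<^sup>2 / (2 * L\<^sup>2)) *\<^sub>R g + (u * exp ((norm x)\<^sup>2 / (2 * L\<^sup>2)) / L\<^sup>2) *\<^sub>R x))\<^sup>2
        * exp (- (norm x)\<^sup>2 / L\<^sup>2)
       = (norm g)^2 + 2 / L^2 * ((u *\<^sub>R x) \<bullet> g) + (norm (u *\<^sub>R x))^2 / (L^2)^2"
proof -
  define e where "e = exp ((norm x)\<^sup>2 / (2 * L\<^sup>2))"
  define c where "c = u / L^2"
  have e0: "e > 0" unfolding e_def by simp
  have v: "e *\<^sub>R g + (u * e / L\<^sup>2) *\<^sub>R x = e *\<^sub>R (g + c *\<^sub>R x)"
    unfolding c_def by (simp add: scaleR_add_right)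
  have ee: "e^2 * exp (- (norm x)\<^sup>2 / L\<^sup>2) = 1"
  proof -
    have "e^2 = exp ((norm x)\<^sup>2 / L\<^sup>2)"
      unfolding e_def power2_eq_square exp_add[symmetric] using L by (simp add: field_simps)
    then show ?thesis by (simp add: exp_add[symmetric])
  qed
  have n: "(norm (g + c *\<^sub>R x))^2 = (norm g)^2 + 2 * c * (g \<bullet> x) + c^2 * (norm x)^2"
    unfolding power2_norm_eq_inner
    by (simp add: inner_add_left inner_add_right inner_commute power2_eq_square algebra_simps)
  have "(norm (e *\<^sub>R (g + c *\<^sub>R x)))^2 * exp (- (norm x)\<^sup>2 / L\<^sup>2) = (e^2 * exp (- (norm x)\<^sup>2 / L\<^sup>2)) * (norm (g + c *\<^sub>R x))^2"
    using e0 by (simp add: power_mult_distrib)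
  also have "\<dots> = (norm g)^2 + 2 * c * (g \<bullet> x) + c^2 * (norm x)^2" using ee n by simp
  also have "\<dots> = (norm g)^2 + 2 / L^2 * ((u *\<^sub>R x) \<bullet> g) + (norm (u *\<^sub>R x))^2 / (L^2)^2"
    unfolding c_def using L by (simp add: power_mult_distrib power_divide inner_commute field_simps)
  finally show ?thesis unfolding e_def[symmetric] v by simp
qed

lemma aux1: "(a::real) > 0 \<Longrightarrow> b / a * a^2 = a * b" by (simp add: power2_eq_square)
lemma aux2: "(a::real) > 0 \<Longrightarrow> b > 0 \<Longrightarrow> b^2 / (b / a) = a * b" by (simp add: power2_eq_square)

theorem proposition1p1:
  fixes \<alpha> :: "real^'n" and u :: "real^'n \<Rightarrow> real" and g :: "real^'n \<Rightarrow> real^'n"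
  assumes "\<forall>i. \<alpha>$i \<ge> 0"
    and "(u, g) \<in> SA \<alpha>"
    and "\<not> (AE x in lborel. x \<in> Rstar \<alpha> \<longrightarrow> u x = 0)"
  defines "D \<equiv> real CARD('n) + (\<Sum>i\<in>UNIV. \<alpha>$i)"
    and "I1 \<equiv> (LINT x:Rstar \<alpha>|lborel. (norm (g x))\<^sup>2 * wA \<alpha> x)"
    and "I2 \<equiv> (LINT x:Rstar \<alpha>|lborel. (u x)\<^sup>2 * (norm x)\<^sup>2 * wA \<alpha> x)"
  defines "lam \<equiv> (I2 / I1) powr (1/4)"
  shows "sqrt I1 * sqrt I2 - D / 2 * (LINT x:Rstar \<alpha>|lborel. (u x)\<^sup>2 * wA \<alpha> x)
    = lam\<^sup>2 / 2 * (LINT x:Rstar \<alpha>|lborel.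
        (norm (exp ((norm x)\<^sup>2 / (2 * lam\<^sup>2)) *\<^sub>R g x
               + (u x * exp ((norm x)\<^sup>2 / (2 * lam\<^sup>2)) / lam\<^sup>2) *\<^sub>R x))\<^sup>2
        * exp (- (norm x)\<^sup>2 / lam\<^sup>2) * wA \<alpha> x)"
proof -
  note \<alpha> = assms(1)
  define M where "M = Mw \<alpha>"
  obtain \<phi> :: "nat \<Rightarrow> real^'n \<Rightarrow> real" where
    um: "u \<in> borel_measurable lborel" and gm: "g \<in> borel_measurable lborel" and
    \<phi>N: "\<And>k. \<phi> k \<in> Nstar \<alpha>" and
    cg: "(\<lambda>k. \<integral>\<^sup>+ x\<in>Rstar \<alpha>. ennreal ((norm (grad (\<phi> k) x - g x))\<^sup>2 * wA \<alpha> x) \<partial>lborel) \<longlonglongrightarrow> 0" and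
    cu: "(\<lambda>k. \<integral>\<^sup>+ x\<in>Rstar \<alpha>. ennreal ((\<phi> k x - u x)\<^sup>2 * (norm x)\<^sup>2 * wA \<alpha> x) \<partial>lborel) \<longlonglongrightarrow> 0"
    using assms(2) unfolding SA_def by auto
  have [measurable]: "u \<in> borel_measurable borel" "g \<in> borel_measurable borel" using um gm by auto
  have Dpos: "D > 0" unfolding D_def using \<alpha> by (simp add: sum_nonneg add_pos_nonneg)
  have "\<exists>R. (\<forall>x. R \<le> norm x \<longrightarrow> \<phi> k x = 0) \<and> (\<forall>x. R \<le> norm x \<longrightarrow> grad (\<phi> k) x = 0)" for k
    using Nstar_supp[OF \<phi>N[of k]] by metis
  then obtain Rs where Rs: "\<And>k x. Rs k \<le> norm x \<Longrightarrow> \<phi> k x = 0" "\<And>k x. Rs k \<le> norm x \<Longrightarrow> grad (\<phi> k) x = 0"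
    by metis
  have der: "(\<phi> k has_derivative (\<lambda>h. grad (\<phi> k) x \<bullet> h)) (at x)" for k x
    by (rule grad_deriv[OF Nstar_diff[OF \<phi>N]])
  have c\<phi>: "continuous_on UNIV (\<phi> k)" for k
    using der by (meson continuous_at_imp_continuous_on has_derivative_continuous)
  have cgr: "continuous_on UNIV (grad (\<phi> k))" for k by (rule grad_cont[OF \<phi>N])
  have [measurable]: "\<phi> k \<in> borel_measurable borel" "grad (\<phi> k) \<in> borel_measurable borel" for k
    using c\<phi> cgr by (auto intro: borel_measurable_continuous_onI)
  have m1[measurable]: "\<phi> k \<in> borel_measurable M" for k unfolding M_def by (auto intro!: meas_Mw)
  have m2[measurable]: "grad (\<phi> k) \<in> borel_measurable M" for k unfolding M_def by (auto intro!: meas_Mw)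
  have m3[measurable]: "u \<in> borel_measurable M" unfolding M_def by (auto intro!: meas_Mw)
  have m4[measurable]: "g \<in> borel_measurable M" unfolding M_def by (auto intro!: meas_Mw)
  have m5[measurable]: "(\<lambda>x. x) \<in> borel_measurable M" unfolding M_def by (auto intro!: meas_Mw)
  have ip: "integrable M (\<lambda>x. (\<phi> k x)^2)" for k
    unfolding M_def
    by (subst int_Mw) (auto intro!: int_cont[OF \<alpha>, where R="Rs k"] continuous_intros c\<phi> Rs)
  have ipx: "integrable M (\<lambda>x. (norm (\<phi> k x *\<^sub>R x))^2)" for k
    unfolding M_def
    by (subst int_Mw) (auto intro!: int_cont[OF \<alpha>, where R="Rs k"] continuous_intros c\<phi> Rs)
  have iff: "integrable M (\<lambda>x. (norm (grad (\<phi> k) x))^2)" for k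
    unfolding M_def
    by (subst int_Mw) (auto intro!: int_cont[OF \<alpha>, where R="Rs k"] continuous_intros cgr Rs)
  have cf: "(\<lambda>k. \<integral>\<^sup>+x. ennreal ((norm (grad (\<phi> k) x - g x))^2) \<partial>M) \<longlonglongrightarrow> 0"
    using cg unfolding M_def by (subst (asm) set_nn_conv) auto
  have cp: "(\<lambda>k. \<integral>\<^sup>+x. ennreal ((norm (\<phi> k x *\<^sub>R x - u x *\<^sub>R x))^2) \<partial>M) \<longlonglongrightarrow> 0"
  proof -
    have "(norm (\<phi> k x *\<^sub>R x - u x *\<^sub>R x))^2 = (\<phi> k x - u x)\<^sup>2 * (norm x)\<^sup>2" for k x
      by (simp add: scaleR_diff_left[symmetric] power_mult_distrib)
    then show ?thesis using cu unfolding M_def by (subst (asm) set_nn_conv) auto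
  qed
  have Hk: "D * (\<integral>x. (\<phi> k x)^2 \<partial>M) = -2 * (\<integral>x. \<phi> k x * (grad (\<phi> k) x \<bullet> x) \<partial>M)" for k
    unfolding M_def D_def
    by (subst (1 2) integral_Mw; (measurable)?)
       (rule P_lemma[OF \<alpha> der cgr, where R="Rs k"], rule Rs)
  have Hdiff: "D * (\<integral>x. (\<phi> k x - \<phi> m x)^2 \<partial>M)
      = -2 * (\<integral>x. (\<phi> k x - \<phi> m x) * ((grad (\<phi> k) x - grad (\<phi> m) x) \<bullet> x) \<partial>M)" for k m
  proof -
    have d: "((\<lambda>x. \<phi> k x - \<phi> m x) has_derivative (\<lambda>h. (grad (\<phi> k) x - grad (\<phi> m) x) \<bullet> h)) (at x)" for x
      using has_derivative_diff[OF der[of k x] der[of m x]] by (simp add: inner_diff_left)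
    have c: "continuous_on UNIV (\<lambda>x. grad (\<phi> k) x - grad (\<phi> m) x)"
      by (intro continuous_intros cgr)
    have s: "\<phi> k x - \<phi> m x = 0" if "max (Rs k) (Rs m) \<le> norm x" for x
      using Rs(1)[of k x] Rs(1)[of m x] that by auto
    show ?thesis
      unfolding M_def D_def
      by (subst (1 2) integral_Mw; (measurable)?) (rule P_lemma[OF \<alpha> d c s])
  qed
  have nz: "AE x in M. x \<noteq> 0" unfolding M_def by (rule AE_Mw_nz)
  note LL = L_lemma[of \<phi> M u "\<lambda>k. grad (\<phi> k)" g D, OF m1 m3 m2 m4 m5 ip ipx iff cf cp Dpos Hdiff Hk nz]
  have iu: "integrable M (\<lambda>x. (u x)^2)" by (rule LL(1))
  have ig: "integrable M (\<lambda>x. (norm (g x))^2)" by (rule LL(2))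
  have iux: "integrable M (\<lambda>x. (norm (u x *\<^sub>R x))^2)" by (rule LL(3))
  have KJ: "D * (\<integral>x. (u x)^2 \<partial>M) = -2 * (\<integral>x. (u x *\<^sub>R x) \<bullet> g x \<partial>M)" by (rule LL(4))
  define K where "K = (\<integral>x. (u x)^2 \<partial>M)"
  define J where "J = (\<integral>x. (u x *\<^sub>R x) \<bullet> g x \<partial>M)"
  have iJ: "integrable M (\<lambda>x. (u x *\<^sub>R x) \<bullet> g x)" by (rule CS_int[OF _ _ iux ig]) auto
  have I1eq: "I1 = (\<integral>x. (norm (g x))^2 \<partial>M)" unfolding I1_def M_def by (rule set_conv) measurable
  have I2eq: "I2 = (\<integral>x. (norm (u x *\<^sub>R x))^2 \<partial>M)"
  proof -
    have "I2 = (\<integral>x. (u x)\<^sup>2 * (norm x)\<^sup>2 \<partial>M)" unfolding I2_def M_def by (rule set_conv) measurable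
    also have "\<dots> = (\<integral>x. (norm (u x *\<^sub>R x))^2 \<partial>M)" by (simp add: power_mult_distrib)
    finally show ?thesis .
  qed
  have Keq: "(LINT x:Rstar \<alpha>|lborel. (u x)\<^sup>2 * wA \<alpha> x) = K" unfolding K_def M_def by (rule set_conv) measurable
  have CSJ: "\<bar>J\<bar> \<le> sqrt I2 * sqrt I1" unfolding J_def I1eq I2eq by (rule CS_le[OF _ _ iux ig]) auto
  have I0: "I1 \<ge> 0" "I2 \<ge> 0" unfolding I1eq I2eq by auto
  have DKJ: "D * K = -2 * J" unfolding K_def J_def by (rule KJ)
  show ?thesis
  proof (cases "I1 > 0 \<and> I2 > 0")
    case False
    then have "I1 = 0 \<or> I2 = 0" using I0 by auto
    then have lam0: "lam = 0" and s0: "sqrt I1 * sqrt I2 = 0" unfolding lam_def by auto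
    have "J = 0" using CSJ s0 by (simp add: mult.commute)
    then have "K = 0" using DKJ Dpos by simp
    then show ?thesis unfolding Keq using s0 lam0 by simp
  next
    case True
    then have I1p: "I1 > 0" and I2p: "I2 > 0" by auto
    have lp: "lam > 0" unfolding lam_def using True by simp
    have lam2: "lam^2 = sqrt I2 / sqrt I1"
    proof -
      have "lam^2 = (I2 / I1) powr (1/4) * (I2 / I1) powr (1/4)" unfolding lam_def power2_eq_square ..
      also have "\<dots> = (I2 / I1) powr (1/2)" by (simp add: powr_add[symmetric])
      also have "\<dots> = sqrt (I2 / I1)" using I0 by (simp add: powr_half_sqrt)
      finally show ?thesis by (simp add: real_sqrt_divide)
    qed
    define F where "F x = (norm (exp ((norm x)\<^sup>2 / (2 * lam\<^sup>2)) *\<^sub>R g x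
               + (u x * exp ((norm x)\<^sup>2 / (2 * lam\<^sup>2)) / lam\<^sup>2) *\<^sub>R x))\<^sup>2
        * exp (- (norm x)\<^sup>2 / lam\<^sup>2)" for x
    have [measurable]: "F \<in> borel_measurable borel" unfolding F_def by measurable
    have Fe: "F x = (norm (g x))^2 + 2 / lam^2 * ((u x *\<^sub>R x) \<bullet> g x) + (norm (u x *\<^sub>R x))^2 / (lam^2)^2" for x
      unfolding F_def by (rule pointwise_id[OF lp])
    have "(LINT x:Rstar \<alpha>|lborel. F x * wA \<alpha> x) = (\<integral>x. F x \<partial>M)"
      unfolding M_def by (rule set_conv) measurable
    also have "\<dots> = (\<integral>x. (norm (g x))^2 + 2 / lam^2 * ((u x *\<^sub>R x) \<bullet> g x) + (norm (u x *\<^sub>R x))^2 / (lam^2)^2 \<partial>M)"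
      unfolding Fe ..
    also have "\<dots> = I1 + 2 / lam^2 * J + I2 / (lam^2)^2"
      unfolding I1eq I2eq J_def using ig iJ iux by simp
    finally have RHS: "(LINT x:Rstar \<alpha>|lborel. F x * wA \<alpha> x) = I1 + 2 / lam^2 * J + I2 / (lam^2)^2" .
    have s1: "sqrt I1 > 0" "(sqrt I1)^2 = I1" using I1p by auto
    have s2: "sqrt I2 > 0" "(sqrt I2)^2 = I2" using I2p by auto
    have JK: "J = - D / 2 * K" using DKJ by simp
    have "lam\<^sup>2 / 2 * (I1 + 2 / lam^2 * J + I2 / (lam^2)^2) = sqrt I1 * sqrt I2 + J"
    proof -
      have "lam\<^sup>2 / 2 * (I1 + 2 / lam^2 * J + I2 / (lam^2)^2) = lam^2 * I1 / 2 + J + I2 / lam^2 / 2"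
        using lp by (simp add: field_simps power2_eq_square)
      also have "lam^2 * I1 = sqrt I1 * sqrt I2"
      proof -
        have "lam^2 * I1 = (sqrt I2 / sqrt I1) * (sqrt I1)^2" by (simp only: lam2 s1(2))
        also have "\<dots> = sqrt I1 * sqrt I2" by (rule aux1[OF s1(1)])
        finally show ?thesis .
      qed
      also have "I2 / lam^2 = sqrt I1 * sqrt I2"
      proof -
        have "I2 / lam^2 = (sqrt I2)^2 / (sqrt I2 / sqrt I1)" by (simp only: lam2 s2(2))
        also have "\<dots> = sqrt I1 * sqrt I2" by (rule aux2[OF s1(1) s2(1)])
        finally show ?thesis .
      qed
      finally show ?thesis by simp
    qed
    then show ?thesis unfolding Keq F_def[symmetric] RHS JK by simp
  qed
qed


end
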